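(* In the setting below with $P=\mathfrak S$ and the absolute error criterion, assume $\lambda\in\ell_{\tau_0}$ for some $\tau_0\in(0,\infty)$. Then: (i) if $\lambda_1<1$, $\{S_d\}$ is strongly polynomially tractable; (ii) if $\lambda_1=1>\lambda_2$ and $b_d\in O(1)$, $\{S_d\}$ is strongly polynomially tractable; (iii) if $\lambda_1=1$ and $b_d\in O(\ln d)$, $\{S_d\}$ is polynomially tractable.
   Context: Setting: $S_1:H_1\to G_1$ is a compact linear operator between real Hilbert spaces ($H_1$ infinite-dimensional separable); $\lambda=(\lambda_m)_{m\in\mathbb N}$, $\lambda_1\ge\lambda_2\ge\dots\ge0$, are the eigenvalues of $S_1^\dagger S_1$. $S_d=S_1^{\otimes d}:H_1^{\otimes d}\to G_1^{\otimes d}$. For each $d$ fix $\emptyset\ne I_d=\{i_1<\dots<i_{a_d}\}\subset\{1,\dots,d\}$ ($I_1=\{1\}$), put $a_d=\#I_d$, $b_d=d-a_d$, and fix one type $P\in\{\mathfrak S,\mathfrak A\}$ for all $d$; the problem $\{S_d\}$ is the family of restrictions of $S_d$ to the $I_d$-symmetric subspace (if $P=\mathfrak S$) or $I_d$-antisymmetric subspace (if $P=\mathfrak A$) of $H_1^{\otimes d}$, i.e. the range of $\frac1{a_d!}\sum_{\pi}(\pm1)U_\pi$, the sum over permutations $\pi$ of $\{1,\dots,d\}$ fixing all points outside $I_d$, $U_\pi(f_1\otimes\cdots\otimes f_d)=f_{\pi(1)}\otimes\cdots\otimes f_{\pi(d)}$, sign $(-1)^{|\pi|}$ used for $\mathfrak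 A$. Let $\nabla_d=\{k\in\mathbb N^d:k_{i_1}\le\dots\le k_{i_{a_d}}\}$ for $P=\mathfrak S$ and with strict inequalities for $P=\mathfrak A$; $\lambda_{d,k}=\prod_{l=1}^d\lambda_{k_l}$; $\psi:\mathbb N\to\nabla_d$ a bijection with $\lambda_{d,\psi(1)}\ge\lambda_{d,\psi(2)}\ge\cdots$. These are exactly the eigenvalues of $S_d^\dagger S_d$ on the subspace, and the information complexity (absolute error) is $n(\epsilon,d)=\#\{k\in\nabla_d:\lambda_{d,k}>\epsilon^2\}$, the initial error $\epsilon^{\rm init}_d=\sqrt{\lambda_{d,\psi(1)}}$ (equal to $\lambda_1^{d/2}$ if $P=\mathfrak S$, and $\sqrt{\lambda_1^{b_d}\lambda_1\lambda_2\cdots\lambda_{a_d}}$ if $P=\mathfrak A$). Polynomially tractable: $\exists C,p>0,q\ge0$ with $n(\epsilon,d)\le C\epsilon^{-p}d^q$ for all $d\in\mathbb N,\epsilon\in(0,1]$; strongly polynomially tractable: this with $q=0$. Standing assumptions: $\lambda_2>0$ and $\epsilon_d^{\rm init}>0$ for all $d$. $\ell_\tau$: sequences with $\|\lambda\|_{\ell_\tau}^\tau=\sum_m\lambda_m^\tau<\infty$. *)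

theory Defs
  imports "HOL-Analysis.Analysis" "HOL-Library.Landau_Symbols"
begin

text \<open>Eigenvalues are indexed from 1: lam 1 \<ge> lam 2 \<ge> ... \<ge> 0 (lam 0 is unused).
  A multi-index k in N^d is represented as k :: nat \<Rightarrow> nat with k l \<ge> 1 for
  l in {1..d} and k l = 0 outside {1..d}.\<close>

definition nabla_sym :: "(nat \<Rightarrow> nat set) \<Rightarrow> nat \<Rightarrow> (nat \<Rightarrow> nat) set" where
  "nabla_sym I d = {k. (\<forall>l. (l \<in> {1..d} \<longrightarrow> 1 \<le> k l) \<and> (l \<notin> {1..d} \<longrightarrow> k l = 0))
                      \<and> (\<forall>i\<in>I d. \<forall>j\<in>I d. i \<le> j \<longrightarrow> k i \<le> k j)}"

definition lam_dk :: "(nat \<Rightarrow> real) \<Rightarrow> nat \<Rightarrow> (nat \<Rightarrow> nat) \<Rightarrow> real" where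
  "lam_dk lam d k = (\<Prod>l\<in>{1..d}. lam (k l))"

text \<open>Set whose cardinality is the information complexity n(eps,d) (absolute error, P = S).\<close>
definition info_set :: "(nat \<Rightarrow> real) \<Rightarrow> (nat \<Rightarrow> nat set) \<Rightarrow> real \<Rightarrow> nat \<Rightarrow> (nat \<Rightarrow> nat) set" where
  "info_set lam I eps d = {k \<in> nabla_sym I d. lam_dk lam d k > eps\<^sup>2}"

definition poly_tractable :: "(nat \<Rightarrow> real) \<Rightarrow> (nat \<Rightarrow> nat set) \<Rightarrow> bool" where
  "poly_tractable lam I \<longleftrightarrow> (\<exists>C p q. C > 0 \<and> p > 0 \<and> q \<ge> 0 \<and>
     (\<forall>d\<ge>1. \<forall>eps. 0 < eps \<and> eps \<le> 1 \<longrightarrow>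
        finite (info_set lam I eps d) \<and>
        real (card (info_set lam I eps d)) \<le> C * eps powr (-p) * real d powr q))"

definition strongly_poly_tractable :: "(nat \<Rightarrow> real) \<Rightarrow> (nat \<Rightarrow> nat set) \<Rightarrow> bool" where
  "strongly_poly_tractable lam I \<longleftrightarrow> (\<exists>C p. C > 0 \<and> p > 0 \<and>
     (\<forall>d\<ge>1. \<forall>eps. 0 < eps \<and> eps \<le> 1 \<longrightarrow>
        finite (info_set lam I eps d) \<and>
        real (card (info_set lam I eps d)) \<le> C * eps powr (-p)))"

definition b_of :: "(nat \<Rightarrow> nat set) \<Rightarrow> nat \<Rightarrow> nat" where
  "b_of I d = d - card (I d)"

end

theory Submission
  imports Defs
begin

lemma card_ge_sum:
  fixes T :: "nat set" and v :: "nat \<Rightarrow> nat"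
  assumes "finite T" "\<forall>l\<in>T. v l \<le> M"
  shows "card {x\<in>T. v x \<ge> m} = (\<Sum>m'\<in>{m..M}. card {x\<in>T. v x = m'})"
proof -
  have "{x\<in>T. v x \<ge> m} = (\<Union>m'\<in>{m..M}. {x\<in>T. v x = m'})" using assms by auto
  moreover have "card (\<Union>m'\<in>{m..M}. {x\<in>T. v x = m'}) = (\<Sum>m'\<in>{m..M}. card {x\<in>T. v x = m'})"
    by (rule card_UN_disjoint) (use assms in auto)
  ultimately show ?thesis by simp
qed

lemma counts_inj_aux:
  fixes T :: "nat set" and v w :: "nat \<Rightarrow> nat"
  assumes fin: "finite T"
    and mv: "\<forall>i\<in>T. \<forall>j\<in>T. i \<le> j \<longrightarrow> v i \<le> v j"
    and mw: "\<forall>i\<in>T. \<forall>j\<in>T. i \<le> j \<longrightarrow> w i \<le> w j"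
    and rv: "\<forall>l\<in>T. 1 \<le> v l \<and> v l \<le> M"
    and rw: "\<forall>l\<in>T. 1 \<le> w l \<and> w l \<le> M"
    and cnt: "\<forall>m\<in>{2..M}. card {x\<in>T. v x = m} = card {x\<in>T. w x = m}"
    and l: "l \<in> T" and lt: "v l < w l"
  shows False
proof -
  define m where "m = w l"
  have m2: "m \<ge> 2" using lt rv l m_def by auto
  have mM: "m \<le> M" using rw l m_def by auto
  have e: "card {x\<in>T. v x \<ge> m} = card {x\<in>T. w x \<ge> m}"
    using card_ge_sum[OF fin, of v M m] card_ge_sum[OF fin, of w M m] rv rw cnt m2
    by (auto intro!: sum.cong)
  have s1: "{x\<in>T. v x \<ge> m} \<subseteq> {x\<in>T. x > l}"
  proof
    fix x assume x: "x \<in> {x\<in>T. v x \<ge> m}"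
    have "\<not> x \<le> l"
    proof
      assume "x \<le> l" then have "v x \<le> v l" using mv x l by auto
      then show False using x lt m_def by auto
    qed
    then show "x \<in> {x\<in>T. x > l}" using x by auto
  qed
  have s2: "{x\<in>T. x \<ge> l} \<subseteq> {x\<in>T. w x \<ge> m}"
    using mw l m_def by auto
  have "{x\<in>T. x > l} \<subset> {x\<in>T. x \<ge> l}" using l by auto
  then have "card {x\<in>T. x > l} < card {x\<in>T. x \<ge> l}"
    by (rule psubset_card_mono[rotated]) (use fin in auto)
  moreover have "card {x\<in>T. v x \<ge> m} \<le> card {x\<in>T. x > l}"
    by (rule card_mono) (use fin s1 in auto)
  moreover have "card {x\<in>T. x \<ge> l} \<le> card {x\<in>T. w x \<ge> m}"
    by (rule card_mono) (use fin s2 in auto)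
  ultimately show False using e by linarith
qed

lemma counts_inj:
  fixes T :: "nat set" and v w :: "nat \<Rightarrow> nat"
  assumes fin: "finite T"
    and mv: "\<forall>i\<in>T. \<forall>j\<in>T. i \<le> j \<longrightarrow> v i \<le> v j"
    and mw: "\<forall>i\<in>T. \<forall>j\<in>T. i \<le> j \<longrightarrow> w i \<le> w j"
    and rv: "\<forall>l\<in>T. 1 \<le> v l \<and> v l \<le> M"
    and rw: "\<forall>l\<in>T. 1 \<le> w l \<and> w l \<le> M"
    and cnt: "\<forall>m\<in>{2..M}. card {x\<in>T. v x = m} = card {x\<in>T. w x = m}"
    and l: "l \<in> T"
  shows "v l = w l"
proof (rule ccontr)
  assume "v l \<noteq> w l"
  then consider "v l < w l" | "w l < v l" by linarith
  then show False
  proof cases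
    case 1 then show ?thesis using counts_inj_aux[OF fin mv mw rv rw cnt l] by blast
  next
    case 2 then show ?thesis using counts_inj_aux[OF fin mw mv rw rv _ l] cnt by metis
  qed
qed


lemma weight_T:
  fixes T :: "nat set" and k :: "nat \<Rightarrow> nat" and mu :: "nat \<Rightarrow> real"
  assumes fin: "finite T" and r: "\<forall>l\<in>T. 1 \<le> k l \<and> k l \<le> M" and one: "mu 1 = 1"
  shows "(\<Prod>l\<in>T. mu (k l)) = (\<Prod>m\<in>{2..M}. mu m ^ card {x\<in>T. k x = m})"
proof -
  have "(\<Prod>l\<in>T. mu (k l)) = (\<Prod>y\<in>{1..M}. \<Prod>x\<in>{x. x \<in> T \<and> k x = y}. mu (k x))"
    by (rule prod.group[symmetric]) (use fin r in auto)
  also have "\<dots> = (\<Prod>y\<in>{1..M}. mu y ^ card {x\<in>T. k x = y})"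
  proof (rule prod.cong)
    fix y assume "y \<in> {1..M}"
    have "(\<Prod>x\<in>{x. x \<in> T \<and> k x = y}. mu (k x)) = (\<Prod>x\<in>{x. x \<in> T \<and> k x = y}. mu y)"
      by (rule prod.cong) auto
    then show "(\<Prod>x\<in>{x. x \<in> T \<and> k x = y}. mu (k x)) = mu y ^ card {x\<in>T. k x = y}"
      by simp
  qed simp
  also have "\<dots> = (\<Prod>m\<in>{2..M}. mu m ^ card {x\<in>T. k x = m})"
  proof (rule prod.mono_neutral_right)
    show "\<forall>i\<in>{1..M} - {2..M}. mu i ^ card {x \<in> T. k x = i} = 1"
    proof
      fix i assume "i \<in> {1..M} - {2..M}"
      then have "i = 1" by auto
      then show "mu i ^ card {x \<in> T. k x = i} = 1" using one by simp
    qed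
  qed auto
  finally show ?thesis .
qed



lemma eventually_small:
  fixes lam :: "nat \<Rightarrow> real"
  assumes nonneg: "\<forall>m\<ge>1. 0 \<le> lam m" and tau: "tau > 0"
    and summ: "summable (\<lambda>m. lam (Suc m) powr tau)" and e: "e > 0"
  obtains N where "\<forall>n\<ge>N. lam (Suc n) < e"
proof -
  have "(\<lambda>m. lam (Suc m) powr tau) \<longlonglongrightarrow> 0" by (rule summable_LIMSEQ_zero[OF summ])
  moreover have "e powr tau > 0" using e by simp
  ultimately have "eventually (\<lambda>n. lam (Suc n) powr tau < e powr tau) sequentially"
    by (rule order_tendstoD(2))
  then obtain N where N: "\<forall>n\<ge>N. lam (Suc n) powr tau < e powr tau"
    by (auto simp: eventually_sequentially)
  have "\<forall>n\<ge>N. lam (Suc n) < e"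
  proof (intro allI impI)
    fix n assume "n \<ge> N"
    with N have lt: "lam (Suc n) powr tau < e powr tau" by auto
    show "lam (Suc n) < e"
    proof (rule ccontr)
      assume "\<not> lam (Suc n) < e"
      then have "e powr tau \<le> lam (Suc n) powr tau"
        using e tau by (intro powr_mono2) auto
      then show False using lt by simp
    qed
  qed
  then show ?thesis using that by blast
qed

lemma factor_ge:
  fixes lam :: "nat \<Rightarrow> real"
  assumes nonneg: "\<forall>m\<ge>1. 0 \<le> lam m" and le1: "\<forall>m\<ge>1. lam m \<le> 1"
    and k: "\<forall>l\<in>{1..d}. 1 \<le> k l" and l: "l \<in> {1..d}"
  shows "lam_dk lam d k \<le> lam (k l)"
proof -
  have "lam_dk lam d k = lam (k l) * (\<Prod>x\<in>{1..d} - {l}. lam (k x))"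
    unfolding lam_dk_def using l by (simp add: prod.remove)
  moreover have "(\<Prod>x\<in>{1..d} - {l}. lam (k x)) \<le> 1"
    by (rule prod_le_1) (use nonneg le1 k in auto)
  moreover have "0 \<le> lam (k l)" using nonneg k l by auto
  ultimately show ?thesis by (simp add: mult_left_le)
qed



lemma core:
  fixes lam :: "nat \<Rightarrow> real" and I :: "nat \<Rightarrow> nat set" and T :: "nat set"
  assumes nonneg: "\<forall>m\<ge>1. 0 \<le> lam m"
    and le1: "\<forall>m\<ge>1. lam m \<le> 1"
    and Id: "I d \<subseteq> {1..d}" and T: "T \<subseteq> I d"
    and eps: "0 < eps" "eps \<le> 1" and tau: "tau > 0"
    and summ: "summable (\<lambda>m. lam (Suc m) powr tau)"
    and one: "lam 1 = 1 \<or> T = {}"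
    and B: "\<forall>M. (\<Prod>m\<in>{2..M}. \<Sum>c\<in>{0..card T}. (lam m powr tau)^c) \<le> B"
  shows "finite (info_set lam I eps d) \<and>
     real (card (info_set lam I eps d)) \<le> eps powr (-(2*tau)) * (suminf (\<lambda>m. lam (Suc m) powr tau))^(d - card T) * B"
proof -
  define mu where "mu m = lam m powr tau" for m
  define A where "A = suminf (\<lambda>m. mu (Suc m))"
  have eps2: "eps^2 > 0" using eps by simp
  obtain N where N: "\<forall>n\<ge>N. lam (Suc n) < eps^2"
    using eventually_small[OF nonneg tau summ eps2] by blast
  define M where "M = N"
  define F where "F = {k\<in>nabla_sym I d. \<forall>l\<in>{1..d}. k l \<le> M}"
  have finT: "finite T" using finite_subset[OF order_trans[OF T Id]] by simp
  have nab: "\<forall>l. (l \<in> {1..d} \<longrightarrow> 1 \<le> k l) \<and> (l \<notin> {1..d} \<longrightarrow> k l = 0)"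
     "\<forall>i\<in>I d. \<forall>j\<in>I d. i \<le> j \<longrightarrow> k i \<le> k j" if "k \<in> nabla_sym I d" for k
    using that unfolding nabla_sym_def by auto
  have sub: "info_set lam I eps d \<subseteq> F"
  proof
    fix k assume k: "k \<in> info_set lam I eps d"
    then have kn: "k \<in> nabla_sym I d" and kg: "lam_dk lam d k > eps^2"
      unfolding info_set_def by auto
    have "k l \<le> M" if l: "l \<in> {1..d}" for l
    proof (rule ccontr)
      assume "\<not> k l \<le> M"
      then have n: "k l = Suc (k l - 1)" "k l - 1 \<ge> N" unfolding M_def by auto
      have "lam_dk lam d k \<le> lam (k l)"
        by (rule factor_ge[OF nonneg le1 _ l]) (use nab(1)[OF kn] in auto)
      moreover have "lam (Suc (k l - 1)) < eps^2" using N n(2) by blast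
      ultimately show False using n(1) kg by simp
    qed
    then show "k \<in> F" unfolding F_def using kn by auto
  qed
  define a where "a = card T"
  define P1 where "P1 = PiE ({1..d} - T) (\<lambda>_. {1..M})"
  define P2 where "P2 = PiE {2..M} (\<lambda>_. {0..a})"
  define phi where "phi k = (restrict k ({1..d} - T), restrict (\<lambda>m. card {x\<in>T. k x = m}) {2..M})" for k :: "nat \<Rightarrow> nat"
  have Frange: "\<forall>l\<in>{1..d}. 1 \<le> k l \<and> k l \<le> M" if "k \<in> F" for k
    using that nab(1) unfolding F_def by auto
  have inj: "inj_on phi F"
  proof (rule inj_onI)
    fix k k' assume k: "k \<in> F" and k': "k' \<in> F" and e: "phi k = phi k'"
    have kn: "k \<in> nabla_sym I d" and kn': "k' \<in> nabla_sym I d" using k k' unfolding F_def by auto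
    have e1: "restrict k ({1..d} - T) = restrict k' ({1..d} - T)" and
         e2: "restrict (\<lambda>m. card {x\<in>T. k x = m}) {2..M} = restrict (\<lambda>m. card {x\<in>T. k' x = m}) {2..M}"
    proof -
      have "restrict k ({1..d} - T) = restrict k' ({1..d} - T) \<and> restrict (\<lambda>m. card {x\<in>T. k x = m}) {2..M} = restrict (\<lambda>m. card {x\<in>T. k' x = m}) {2..M}"
        using e unfolding phi_def prod.inject .
      then show "restrict k ({1..d} - T) = restrict k' ({1..d} - T)" "restrict (\<lambda>m. card {x\<in>T. k x = m}) {2..M} = restrict (\<lambda>m. card {x\<in>T. k' x = m}) {2..M}" by blast+
    qed
    have cnt: "\<forall>m\<in>{2..M}. card {x\<in>T. k x = m} = card {x\<in>T. k' x = m}"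
    proof
      fix m assume m: "m \<in> {2..M}"
      from fun_cong[OF e2, of m] m show "card {x\<in>T. k x = m} = card {x\<in>T. k' x = m}" by simp
    qed
    show "k = k'"
    proof
      fix x
      consider "x \<notin> {1..d}" | "x \<in> {1..d} - T" | "x \<in> T" using T Id by blast
      then show "k x = k' x"
      proof cases
        case 1 then show ?thesis using nab(1)[OF kn] nab(1)[OF kn'] by auto
      next
        case 2 then show ?thesis using fun_cong[OF e1, of x] by simp
      next
        case 3
        show ?thesis
        proof (rule counts_inj[OF finT _ _ _ _ cnt 3])
          show "\<forall>i\<in>T. \<forall>j\<in>T. i \<le> j \<longrightarrow> k i \<le> k j" using nab(2)[OF kn] T by blast
          show "\<forall>i\<in>T. \<forall>j\<in>T. i \<le> j \<longrightarrow> k' i \<le> k' j" using nab(2)[OF kn'] T by blast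
          show "\<forall>l\<in>T. 1 \<le> k l \<and> k l \<le> M" using Frange[OF k] T Id by blast
          show "\<forall>l\<in>T. 1 \<le> k' l \<and> k' l \<le> M" using Frange[OF k'] T Id by blast
        qed
      qed
    qed
  qed
  have img: "phi ` F \<subseteq> P1 \<times> P2"
  proof
    fix z assume "z \<in> phi ` F"
    then obtain k where k: "k \<in> F" and z: "z = phi k" by auto
    have "restrict k ({1..d} - T) \<in> P1" unfolding P1_def using Frange[OF k] by auto
    moreover have "card {x\<in>T. k x = m} \<le> a" for m
      unfolding a_def by (rule card_mono[OF finT]) auto
    then have "restrict (\<lambda>m. card {x\<in>T. k x = m}) {2..M} \<in> P2" unfolding P2_def by auto
    ultimately show "z \<in> P1 \<times> P2" unfolding z phi_def by auto
  qed
  have finP: "finite (P1 \<times> P2)" unfolding P1_def P2_def by (intro finite_cartesian_product finite_PiE) auto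
  have finF: "finite F" by (rule inj_on_finite[OF inj img finP])
  have fin_info: "finite (info_set lam I eps d)" using finite_subset[OF sub finF] .
  define w where "w k = lam_dk lam d k powr tau" for k
  define G where "G z = (\<Prod>l\<in>{1..d} - T. mu (fst z l)) * (\<Prod>m\<in>{2..M}. mu m ^ snd z m)" for z :: "(nat \<Rightarrow> nat) \<times> (nat \<Rightarrow> nat)"
  have mu_nonneg: "mu m \<ge> 0" for m unfolding mu_def by simp
  have G_nonneg: "G z \<ge> 0" for z unfolding G_def using mu_nonneg by (intro mult_nonneg_nonneg prod_nonneg) auto
  have wG: "w k = G (phi k)" if k: "k \<in> F" for k
  proof -
    have kn: "k \<in> nabla_sym I d" using k unfolding F_def by auto
    have "w k = (\<Prod>l\<in>{1..d}. mu (k l))"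
      unfolding w_def lam_dk_def mu_def by (rule prod_powr_distrib)
    also have "\<dots> = (\<Prod>l\<in>{1..d} - T. mu (k l)) * (\<Prod>l\<in>T. mu (k l))"
      by (rule prod.subset_diff) (use T Id in auto)
    also have "(\<Prod>l\<in>T. mu (k l)) = (\<Prod>m\<in>{2..M}. mu m ^ card {x\<in>T. k x = m})"
      using one
    proof
      assume "lam 1 = 1"
      then have "mu 1 = 1" unfolding mu_def by simp
      moreover have "\<forall>l\<in>T. 1 \<le> k l \<and> k l \<le> M" using Frange[OF k] T Id by blast
      ultimately show ?thesis using weight_T[OF finT] by blast
    next
      assume "T = {}" then show ?thesis by simp
    qed
    also have "(\<Prod>l\<in>{1..d} - T. mu (k l)) = (\<Prod>l\<in>{1..d} - T. mu (fst (phi k) l))"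
      unfolding phi_def by (rule prod.cong) auto
    also have "(\<Prod>m\<in>{2..M}. mu m ^ card {x\<in>T. k x = m}) = (\<Prod>m\<in>{2..M}. mu m ^ snd (phi k) m)"
      unfolding phi_def by (rule prod.cong) auto
    finally show ?thesis unfolding G_def .
  qed
  have w_ge: "w k \<ge> eps powr (2*tau)" if "k \<in> info_set lam I eps d" for k
  proof -
    have "lam_dk lam d k > eps^2" using that unfolding info_set_def by auto
    then have "(eps^2) powr tau \<le> w k" unfolding w_def using tau by (intro powr_mono2) auto
    moreover have "(eps^2) powr tau = eps powr (2*tau)"
    proof -
      have "eps^2 = eps powr 2" using powr_realpow[of eps 2] eps by simp
      then show ?thesis by (simp add: powr_powr)
    qed
    ultimately show ?thesis by simp
  qed
  have epos: "eps powr (2*tau) > 0" using eps by simp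
  have c0: "real (card (info_set lam I eps d)) \<le> (\<Sum>k\<in>info_set lam I eps d. w k) / eps powr (2*tau)"
  proof -
    have "real (card (info_set lam I eps d)) = (\<Sum>k\<in>info_set lam I eps d. 1)" by simp
    also have "\<dots> \<le> (\<Sum>k\<in>info_set lam I eps d. w k / eps powr (2*tau))"
      by (rule sum_mono) (use w_ge epos in simp)
    also have "\<dots> = (\<Sum>k\<in>info_set lam I eps d. w k) / eps powr (2*tau)"
      by (simp add: sum_divide_distrib)
    finally show ?thesis .
  qed
  have c2: "(\<Sum>k\<in>info_set lam I eps d. w k) \<le> (\<Sum>z\<in>P1 \<times> P2. G z)"
  proof -
    have "(\<Sum>k\<in>info_set lam I eps d. w k) \<le> (\<Sum>k\<in>F. w k)"
      by (rule sum_mono2[OF finF sub]) (simp add: w_def)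
    also have "(\<Sum>k\<in>F. w k) = (\<Sum>k\<in>F. G (phi k))" by (rule sum.cong) (auto simp: wG)
    also have "\<dots> = (\<Sum>z\<in>phi ` F. G z)" using sum.reindex[OF inj, of G] by (simp add: comp_def)
    also have "\<dots> \<le> (\<Sum>z\<in>P1 \<times> P2. G z)" by (rule sum_mono2[OF finP img]) (simp add: G_nonneg)
    finally show ?thesis .
  qed
  have c3: "(\<Sum>z\<in>P1 \<times> P2. G z) = (\<Sum>u\<in>P1. \<Prod>l\<in>{1..d} - T. mu (u l)) * (\<Sum>c\<in>P2. \<Prod>m\<in>{2..M}. mu m ^ c m)"
    unfolding G_def sum_product sum.cartesian_product by (simp add: case_prod_beta)
  have c4: "(\<Sum>u\<in>P1. \<Prod>l\<in>{1..d} - T. mu (u l)) = (\<Prod>l\<in>{1..d} - T. \<Sum>m\<in>{1..M}. mu m)"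
    unfolding P1_def by (rule prod_sum_PiE[symmetric]) auto
  have c5: "(\<Sum>c\<in>P2. \<Prod>m\<in>{2..M}. mu m ^ c m) = (\<Prod>m\<in>{2..M}. \<Sum>c\<in>{0..a}. mu m ^ c)"
    unfolding P2_def by (rule prod_sum_PiE[symmetric]) auto
  have c6: "(\<Prod>l\<in>{1..d} - T. \<Sum>m\<in>{1..M}. mu m) = (\<Sum>m\<in>{1..M}. mu m) ^ (d - a)"
  proof -
    have "card ({1..d} - T) = d - a" unfolding a_def using T Id by (simp add: card_Diff_subset finT)
    then show ?thesis by simp
  qed
  have c1: "real (card (info_set lam I eps d)) \<le> (\<Sum>m\<in>{1..M}. mu m) ^ (d - a) * (\<Prod>m\<in>{2..M}. \<Sum>c\<in>{0..a}. mu m ^ c) / eps powr (2*tau)"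
  proof -
    have "(\<Sum>k\<in>info_set lam I eps d. w k) \<le> (\<Sum>m\<in>{1..M}. mu m) ^ (d - a) * (\<Prod>m\<in>{2..M}. \<Sum>c\<in>{0..a}. mu m ^ c)"
      using c2 c3 c4 c5 c6 by simp
    then show ?thesis using c0 epos by (meson divide_right_mono less_le order_trans)
  qed
  have s0: "0 \<le> (\<Sum>m\<in>{1..M}. mu m)" using mu_nonneg by (simp add: sum_nonneg)
  have sA: "(\<Sum>m\<in>{1..M}. mu m) \<le> A"
  proof -
    have "(\<Sum>m\<in>{1..M}. mu m) = (\<Sum>n<M. mu (Suc n))" using sum.atLeast1_atMost_eq by simp
    also have "\<dots> \<le> A" unfolding A_def
      by (rule sum_le_suminf) (use summ mu_nonneg in \<open>auto simp: mu_def\<close>)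
    finally show ?thesis .
  qed
  have p0: "0 \<le> (\<Prod>m\<in>{2..M}. \<Sum>c\<in>{0..a}. mu m ^ c)" using mu_nonneg by (intro prod_nonneg sum_nonneg) auto
  have pB: "(\<Prod>m\<in>{2..M}. \<Sum>c\<in>{0..a}. mu m ^ c) \<le> B" using B unfolding mu_def a_def by blast
  have "(\<Sum>m\<in>{1..M}. mu m) ^ (d - a) * (\<Prod>m\<in>{2..M}. \<Sum>c\<in>{0..a}. mu m ^ c) \<le> A ^ (d - a) * B"
    by (intro mult_mono power_mono sA s0 pB p0) (use s0 sA in auto)
  then have "real (card (info_set lam I eps d)) \<le> A ^ (d - a) * B / eps powr (2*tau)"
    using c1 epos by (meson divide_right_mono less_le order_trans)
  also have "\<dots> = eps powr (-(2*tau)) * A ^ (d - a) * B"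
    by (simp add: powr_minus divide_inverse)
  finally show ?thesis using fin_info unfolding A_def mu_def a_def by simp
qed



lemma geom_small:
  fixes x :: real
  assumes "0 \<le> x" "x \<le> 1/2"
  shows "(\<Sum>c\<in>{0..a}. x ^ c) \<le> exp (2 * x)"
proof -
  have "(1 - x) * (\<Sum>c\<le>a. x ^ c) = 1 - x ^ Suc a" by (rule sum_gp_basic)
  also have "\<dots> \<le> 1" using assms by simp
  finally have h: "(1 - x) * (\<Sum>c\<le>a. x ^ c) \<le> 1" .
  have s0: "0 \<le> (\<Sum>c\<le>a. x ^ c)" using assms by (simp add: sum_nonneg)
  have "(\<Sum>c\<le>a. x ^ c) \<le> 1 + 2 * x"
  proof -
    have "(1 + 2*x) * (1 - x) \<ge> 1" using mult_nonneg_nonneg[of x "1-2*x"] assms by (simp add: algebra_simps)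
    then have "(\<Sum>c\<le>a. x ^ c) * 1 \<le> (\<Sum>c\<le>a. x ^ c) * ((1 + 2*x) * (1 - x))"
      using s0 by (intro mult_left_mono) auto
    also have "\<dots> = (1 + 2*x) * ((1 - x) * (\<Sum>c\<le>a. x ^ c))" by (simp add: algebra_simps)
    also have "\<dots> \<le> (1 + 2*x) * 1" using h assms by (intro mult_left_mono) auto
    finally show ?thesis by simp
  qed
  also have "\<dots> \<le> exp (2 * x)" using exp_ge_add_one_self[of "2*x"] by simp
  finally show ?thesis by (simp add: atLeast0AtMost)
qed

lemma prod_bound:
  fixes mu :: "nat \<Rightarrow> real"
  assumes r01: "\<forall>m\<ge>1. 0 \<le> mu m \<and> mu m \<le> 1" and small: "\<forall>m>r. mu m \<le> 1/2"
    and summ: "summable (\<lambda>n. mu (Suc n))"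
  shows "(\<Prod>m\<in>{2..M}. \<Sum>c\<in>{0..a}. mu m ^ c) \<le> (real a + 1)^(r - 1) * exp (2 * suminf (\<lambda>n. mu (Suc n)))"
proof -
  define f where "f m = (if m \<le> r then real a + 1 else 1)" for m
  have fb: "(\<Sum>c\<in>{0..a}. mu m ^ c) \<le> f m * exp (2 * mu m)" if m: "m \<in> {2..M}" for m
  proof (cases "m \<le> r")
    case True
    have "(\<Sum>c\<in>{0..a}. mu m ^ c) \<le> (\<Sum>c\<in>{0..a}. 1)"
      by (rule sum_mono) (use r01 m in \<open>auto intro: power_le_one\<close>)
    also have "\<dots> = real a + 1" by simp
    also have "\<dots> \<le> (real a + 1) * exp (2 * mu m)"
      using r01 m by (simp add: mult_le_cancel_left1)
    finally show ?thesis using True f_def by simp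
  next
    case False
    then show ?thesis using geom_small[of "mu m" a] r01 small m f_def by auto
  qed
  have "(\<Prod>m\<in>{2..M}. \<Sum>c\<in>{0..a}. mu m ^ c) \<le> (\<Prod>m\<in>{2..M}. f m * exp (2 * mu m))"
    by (rule prod_mono) (use fb r01 in \<open>auto intro: sum_nonneg\<close>)
  also have "\<dots> = (\<Prod>m\<in>{2..M}. f m) * exp (2 * (\<Sum>m\<in>{2..M}. mu m))"
    by (simp add: prod.distrib exp_sum sum_distrib_left)
  finally have P1: "(\<Prod>m\<in>{2..M}. \<Sum>c\<in>{0..a}. mu m ^ c) \<le> (\<Prod>m\<in>{2..M}. f m) * exp (2 * (\<Sum>m\<in>{2..M}. mu m))" .
  have P2: "(\<Prod>m\<in>{2..M}. f m) \<le> (real a + 1)^(r - 1)"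
  proof -
    have "(\<Prod>m\<in>{2..M}. f m) = (\<Prod>m\<in>{m\<in>{2..M}. m \<le> r}. real a + 1)"
      unfolding f_def by (rule prod.inter_filter[symmetric]) simp
    also have "\<dots> = (real a + 1) ^ card {m\<in>{2..M}. m \<le> r}" by simp
    also have "\<dots> \<le> (real a + 1) ^ (r - 1)"
    proof (rule power_increasing)
      have "{m\<in>{2..M}. m \<le> r} \<subseteq> {2..r}" by auto
      then have "card {m\<in>{2..M}. m \<le> r} \<le> card {2..r}" by (rule card_mono[rotated]) simp
      then show "card {m\<in>{2..M}. m \<le> r} \<le> r - 1" by simp
    qed simp
    finally show ?thesis .
  qed
  have P3: "(\<Sum>m\<in>{2..M}. mu m) \<le> suminf (\<lambda>n. mu (Suc n))"
  proof -
    have "(\<Sum>m\<in>{2..M}. mu m) \<le> (\<Sum>m\<in>{1..M}. mu m)"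
      by (rule sum_mono2) (use r01 in auto)
    also have "\<dots> = (\<Sum>n<M. mu (Suc n))" using sum.atLeast1_atMost_eq by simp
    also have "\<dots> \<le> suminf (\<lambda>n. mu (Suc n))"
      by (rule sum_le_suminf) (use summ r01 in auto)
    finally show ?thesis .
  qed
  have "(\<Prod>m\<in>{2..M}. f m) * exp (2 * (\<Sum>m\<in>{2..M}. mu m)) \<le> (real a + 1)^(r - 1) * exp (2 * suminf (\<lambda>n. mu (Suc n)))"
    by (rule mult_mono[OF P2]) (use P3 in \<open>auto simp: f_def intro: prod_nonneg\<close>)
  with P1 show ?thesis by linarith
qed



lemma lam_le_lam1:
  fixes lam :: "nat \<Rightarrow> real"
  assumes noninc: "\<forall>m\<ge>1. lam (Suc m) \<le> lam m"
  shows "m \<ge> 1 \<Longrightarrow> lam m \<le> lam 1"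
proof (induction m rule: dec_induct[of 1])
  case base then show ?case by simp
next
  case (step n) then show ?case using noninc by (meson order_trans)
qed

lemma lam_le_lam2:
  fixes lam :: "nat \<Rightarrow> real"
  assumes noninc: "\<forall>m\<ge>1. lam (Suc m) \<le> lam m"
  shows "m \<ge> 2 \<Longrightarrow> lam m \<le> lam 2"
proof (induction m rule: dec_induct[of 2])
  case base then show ?case by simp
next
  case (step n) then show ?case using noninc by (meson order_trans one_le_numeral)
qed

lemma summ_mono:
  fixes lam :: "nat \<Rightarrow> real"
  assumes nonneg: "\<forall>m\<ge>1. 0 \<le> lam m" and le1: "\<forall>m\<ge>1. lam m \<le> 1"
    and ltau: "summable (\<lambda>m. lam (Suc m) powr tau0)" and t: "tau0 \<le> t"
  shows "summable (\<lambda>m. lam (Suc m) powr t)"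
proof (rule summable_comparison_test'[OF ltau])
  fix n :: nat
  have "lam (Suc n) powr t \<le> lam (Suc n) powr tau0"
    by (rule powr_mono'[OF t]) (use nonneg le1 in auto)
  then show "norm (lam (Suc n) powr t) \<le> lam (Suc n) powr tau0" by simp
qed

lemma A_ge1:
  fixes mu :: "nat \<Rightarrow> real"
  assumes "\<forall>m\<ge>1. 0 \<le> mu m" "mu 1 = 1" "summable (\<lambda>n. mu (Suc n))"
  shows "1 \<le> suminf (\<lambda>n. mu (Suc n))"
proof -
  have "(\<Sum>n\<in>{0}. mu (Suc n)) \<le> suminf (\<lambda>n. mu (Suc n))"
    by (rule sum_le_suminf) (use assms in auto)
  then show ?thesis using assms by simp
qed

lemma powr_split_bound:
  fixes lam :: "nat \<Rightarrow> real" and x y :: real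
  assumes "0 \<le> x" "x \<le> 1" "x \<le> y"
  shows "x powr (tau0 + real n) \<le> x powr tau0 * y ^ n"
proof (cases "x = 0")
  case True then show ?thesis using assms by simp
next
  case False
  then have "x powr (tau0 + real n) = x powr tau0 * x ^ n"
    using assms by (simp add: powr_add powr_realpow)
  also have "\<dots> \<le> x powr tau0 * y ^ n"
    using assms by (intro mult_left_mono power_mono) auto
  finally show ?thesis .
qed



lemma part1:
  fixes lam :: "nat \<Rightarrow> real" and I :: "nat \<Rightarrow> nat set" and tau0 :: real
  assumes nonneg: "\<forall>m\<ge>1. 0 \<le> lam m"
    and noninc: "\<forall>m\<ge>1. lam (Suc m) \<le> lam m"
    and lam2_pos: "lam 2 > 0"
    and I_ok: "\<forall>d\<ge>1. I d \<noteq> {} \<and> I d \<subseteq> {1..d}"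
    and tau0_pos: "tau0 > 0"
    and ltau: "summable (\<lambda>m. lam (Suc m) powr tau0)"
    and l1: "lam 1 < 1"
  shows "strongly_poly_tractable lam I"
proof -
  have lel1: "lam m \<le> lam 1" if "m \<ge> 1" for m using lam_le_lam1[OF noninc that] .
  have le1: "\<forall>m\<ge>1. lam m \<le> 1" using lel1 l1 by force
  have l1pos: "lam 1 > 0" using lel1[of 2] lam2_pos by simp
  define L where "L = suminf (\<lambda>m. lam (Suc m) powr tau0)"
  have Lpos: "L > 0"
  proof -
    have "(\<Sum>n\<in>{0}. lam (Suc n) powr tau0) \<le> L"
      unfolding L_def by (rule sum_le_suminf) (use ltau in auto)
    moreover have "lam (Suc 0) powr tau0 > 0" using l1pos by simp
    moreover have "(\<Sum>n\<in>{0::nat}. lam (Suc n) powr tau0) = lam (Suc 0) powr tau0" by simp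
    ultimately show ?thesis by linarith
  qed
  have "(\<lambda>n. lam 1 ^ n) \<longlonglongrightarrow> 0" using l1 l1pos by (intro LIMSEQ_power_zero) auto
  moreover have "1 / L > 0" using Lpos by simp
  ultimately have "eventually (\<lambda>n. lam 1 ^ n < 1 / L) sequentially" by (rule order_tendstoD(2))
  then obtain n where n: "lam 1 ^ n < 1 / L" by (auto simp: eventually_sequentially)
  define tau where "tau = tau0 + real n"
  have tau: "tau > 0" "tau0 \<le> tau" using tau0_pos unfolding tau_def by auto
  have summ: "summable (\<lambda>m. lam (Suc m) powr tau)" by (rule summ_mono[OF nonneg le1 ltau tau(2)])
  define A where "A = suminf (\<lambda>m. lam (Suc m) powr tau)"
  have A0: "0 \<le> A" unfolding A_def by (rule suminf_nonneg[OF summ]) simp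
  have A1: "A \<le> 1"
  proof -
    have "A \<le> (\<Sum>m. lam (Suc m) powr tau0 * lam 1 ^ n)"
      unfolding A_def
    proof (rule suminf_le)
      fix m show "lam (Suc m) powr tau \<le> lam (Suc m) powr tau0 * lam 1 ^ n"
        unfolding tau_def by (rule powr_split_bound) (use nonneg le1 lel1 in auto)
    qed (use summ ltau summable_mult2 in auto)
    also have "\<dots> = L * lam 1 ^ n" unfolding L_def by (rule suminf_mult2[OF ltau, symmetric])
    also have "\<dots> \<le> 1" using n Lpos by (simp add: field_simps)
    finally show ?thesis .
  qed
  show ?thesis unfolding strongly_poly_tractable_def
  proof (intro exI conjI allI impI)
    show "(1::real) > 0" by simp
    show "2 * tau > 0" using tau by simp
    fix d :: nat and eps :: real
    assume d: "d \<ge> 1" and eps: "0 < eps \<and> eps \<le> 1"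
    have B: "\<forall>M. (\<Prod>m\<in>{2..M}. \<Sum>c\<in>{0..card ({}::nat set)}. (lam m powr tau)^c) \<le> 1" by simp
    have c: "finite (info_set lam I eps d) \<and> real (card (info_set lam I eps d)) \<le> eps powr (-(2*tau)) * A^(d - card ({}::nat set)) * 1"
      unfolding A_def
      by (rule core[OF nonneg le1 _ _ _ _ tau(1) summ _ B]) (use I_ok d eps in auto)
    have "A ^ d \<le> 1" using A0 A1 by (simp add: power_le_one)
    then have "eps powr (-(2*tau)) * A^d \<le> eps powr (-(2*tau)) * 1" by (intro mult_left_mono) auto
    then show "finite (info_set lam I eps d)" "real (card (info_set lam I eps d)) \<le> 1 * eps powr (- (2 * tau))"
      using c by auto
  qed
qed



lemma part2:
  fixes lam :: "nat \<Rightarrow> real" and I :: "nat \<Rightarrow> nat set" and tau0 :: real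
  assumes nonneg: "\<forall>m\<ge>1. 0 \<le> lam m"
    and noninc: "\<forall>m\<ge>1. lam (Suc m) \<le> lam m"
    and lam2_pos: "lam 2 > 0"
    and I_ok: "\<forall>d\<ge>1. I d \<noteq> {} \<and> I d \<subseteq> {1..d}"
    and tau0_pos: "tau0 > 0"
    and ltau: "summable (\<lambda>m. lam (Suc m) powr tau0)"
    and l1: "lam 1 = 1" and l2: "lam 2 < 1"
    and bO: "(\<lambda>d. real (b_of I d)) \<in> O(\<lambda>_. 1)"
  shows "strongly_poly_tractable lam I"
proof -
  have lel1: "lam m \<le> lam 1" if "m \<ge> 1" for m using lam_le_lam1[OF noninc that] .
  have lel2: "lam m \<le> lam 2" if "m \<ge> 2" for m using lam_le_lam2[OF noninc that] .
  have le1: "\<forall>m\<ge>1. lam m \<le> 1" using lel1 l1 by force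
  have "(\<lambda>n. lam 2 ^ n) \<longlonglongrightarrow> 0" using l2 lam2_pos by (intro LIMSEQ_power_zero) auto
  moreover have "(1/2::real) > 0" by simp
  ultimately have "eventually (\<lambda>n. lam 2 ^ n < 1/2) sequentially" by (rule order_tendstoD(2))
  then obtain n where n: "lam 2 ^ n < 1/2" by (auto simp: eventually_sequentially)
  define tau where "tau = tau0 + real n"
  have tau: "tau > 0" "tau0 \<le> tau" using tau0_pos unfolding tau_def by auto
  have summ: "summable (\<lambda>m. lam (Suc m) powr tau)" by (rule summ_mono[OF nonneg le1 ltau tau(2)])
  define A where "A = suminf (\<lambda>m. lam (Suc m) powr tau)"
  define mu where "mu m = lam m powr tau" for m
  have mu01: "\<forall>m\<ge>1. 0 \<le> mu m \<and> mu m \<le> 1" unfolding mu_def using le1 nonneg tau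
    by (auto intro!: powr_le1)
  have musmall: "\<forall>m>1. mu m \<le> 1/2"
  proof (intro allI impI)
    fix m :: nat assume m: "m > 1"
    have "mu m \<le> lam m powr tau0 * lam 2 ^ n"
      unfolding mu_def tau_def by (rule powr_split_bound) (use nonneg le1 lel2 m in auto)
    also have "\<dots> \<le> 1 * (1/2)"
    proof (rule mult_mono)
      show "lam m powr tau0 \<le> 1" using le1 nonneg m tau0_pos by (auto intro!: powr_le1)
    qed (use n lam2_pos in auto)
    finally show "mu m \<le> 1/2" by simp
  qed
  have summu: "summable (\<lambda>n. mu (Suc n))" using summ unfolding mu_def .
  have A1: "1 \<le> A" unfolding A_def using A_ge1[of mu] mu01 summu l1 unfolding mu_def by auto
  obtain c where c: "c > 0" "eventually (\<lambda>d. norm (real (b_of I d)) \<le> c * norm (1::real)) at_top"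
    using bO by (elim landau_o.bigE)
  then obtain N where N: "\<forall>d\<ge>N. real (b_of I d) \<le> c" by (auto simp: eventually_at_top_linorder)
  define Bn where "Bn = nat \<lceil>c\<rceil> + N"
  have bB: "b_of I d \<le> Bn" for d
  proof (cases "d \<ge> N")
    case True then have "real (b_of I d) \<le> c" using N by auto
    then have "b_of I d \<le> nat \<lceil>c\<rceil>" by linarith
    then show ?thesis unfolding Bn_def by simp
  next
    case False then show ?thesis unfolding Bn_def b_of_def by simp
  qed
  show ?thesis unfolding strongly_poly_tractable_def
  proof (intro exI conjI allI impI)
    show "A ^ Bn * exp (2 * A) > 0" using A1 by simp
    show "2 * tau > 0" using tau by simp
    fix d :: nat and eps :: real
    assume d: "d \<ge> 1" and eps: "0 < eps \<and> eps \<le> 1"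
    have B: "\<forall>M. (\<Prod>m\<in>{2..M}. \<Sum>c\<in>{0..card (I d)}. (lam m powr tau)^c) \<le> exp (2 * A)"
    proof
      fix M
      have "(\<Prod>m\<in>{2..M}. \<Sum>c\<in>{0..card (I d)}. mu m ^ c) \<le> (real (card (I d)) + 1) ^ (1 - 1) * exp (2 * suminf (\<lambda>n. mu (Suc n)))"
        by (rule prod_bound[OF mu01 musmall summu])
      then show "(\<Prod>m\<in>{2..M}. \<Sum>c\<in>{0..card (I d)}. (lam m powr tau)^c) \<le> exp (2 * A)"
        unfolding mu_def A_def by simp
    qed
    have cc: "finite (info_set lam I eps d) \<and> real (card (info_set lam I eps d)) \<le> eps powr (-(2*tau)) * A^(d - card (I d)) * exp (2 * A)"
      unfolding A_def
      by (rule core[OF nonneg le1 _ _ _ _ tau(1) summ _ B[unfolded A_def]]) (use I_ok d eps l1 in auto)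
    have "A ^ (d - card (I d)) \<le> A ^ Bn"
      using A1 bB[of d] unfolding b_of_def by (intro power_increasing) auto
    then have "eps powr (-(2*tau)) * A^(d - card (I d)) * exp (2 * A) \<le> eps powr (-(2*tau)) * A^Bn * exp (2 * A)"
      by (intro mult_right_mono mult_left_mono) auto
    then have X: "real (card (info_set lam I eps d)) \<le> eps powr (-(2*tau)) * A^Bn * exp (2 * A)"
      using cc by linarith
    have eq: "A ^ Bn * exp (2 * A) * eps powr (- (2 * tau)) = eps powr (-(2*tau)) * A^Bn * exp (2 * A)"
      by (simp add: ac_simps)
    show "finite (info_set lam I eps d)" using cc by blast
    show "real (card (info_set lam I eps d)) \<le> A ^ Bn * exp (2 * A) * eps powr (- (2 * tau))"
      using X eq by linarith
  qed
qed



lemma part3: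
  fixes lam :: "nat \<Rightarrow> real" and I :: "nat \<Rightarrow> nat set" and tau0 :: real
  assumes nonneg: "\<forall>m\<ge>1. 0 \<le> lam m"
    and noninc: "\<forall>m\<ge>1. lam (Suc m) \<le> lam m"
    and lam2_pos: "lam 2 > 0"
    and I_ok: "\<forall>d\<ge>1. I d \<noteq> {} \<and> I d \<subseteq> {1..d}"
    and tau0_pos: "tau0 > 0"
    and ltau: "summable (\<lambda>m. lam (Suc m) powr tau0)"
    and l1: "lam 1 = 1"
    and bO: "(\<lambda>d. real (b_of I d)) \<in> O(\<lambda>d. ln (real d))"
  shows "poly_tractable lam I"
proof -
  have lel1: "lam m \<le> lam 1" if "m \<ge> 1" for m using lam_le_lam1[OF noninc that] .
  have le1: "\<forall>m\<ge>1. lam m \<le> 1" using lel1 l1 by force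
  have half: "(1/2::real) > 0" by simp
  obtain N0 where N0: "\<forall>n\<ge>N0. lam (Suc n) < 1/2"
    using eventually_small[OF nonneg tau0_pos ltau half] by blast
  define r where "r = N0"
  define tau where "tau = tau0 + real 1"
  have tau: "tau > 0" "tau0 \<le> tau" using tau0_pos unfolding tau_def by auto
  have summ: "summable (\<lambda>m. lam (Suc m) powr tau)" by (rule summ_mono[OF nonneg le1 ltau tau(2)])
  define A where "A = suminf (\<lambda>m. lam (Suc m) powr tau)"
  define mu where "mu m = lam m powr tau" for m
  have mu01: "\<forall>m\<ge>1. 0 \<le> mu m \<and> mu m \<le> 1" unfolding mu_def using le1 nonneg tau
    by (auto intro!: powr_le1)
  have musmall: "\<forall>m>r. mu m \<le> 1/2"
  proof (intro allI impI)
    fix m :: nat assume m: "m > r"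
    then have mm: "m = Suc (m - 1)" "m - 1 \<ge> N0" unfolding r_def by auto
    have lm: "lam m < 1/2" using N0 mm by metis
    have "mu m \<le> lam m powr tau0 * lam m ^ 1"
      unfolding mu_def tau_def by (rule powr_split_bound) (use nonneg le1 m in auto)
    also have "\<dots> \<le> 1 * lam m"
    proof -
      have "lam m powr tau0 \<le> 1" using le1 nonneg m tau0_pos by (auto intro!: powr_le1)
      moreover have "0 \<le> lam m" using nonneg m by auto
      ultimately show ?thesis using mult_right_mono[of "lam m powr tau0" 1 "lam m"] by simp
    qed
    finally show "mu m \<le> 1/2" using lm by simp
  qed
  have summu: "summable (\<lambda>n. mu (Suc n))" using summ unfolding mu_def .
  have A1: "1 \<le> A" unfolding A_def using A_ge1[of mu] mu01 summu l1 unfolding mu_def by auto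
  have lnA: "0 \<le> ln A" using A1 by simp
  obtain c where c: "c > 0" "eventually (\<lambda>d. norm (real (b_of I d)) \<le> c * norm (ln (real d))) at_top"
    using bO by (elim landau_o.bigE)
  then obtain N1 where N1: "\<forall>d\<ge>N1. norm (real (b_of I d)) \<le> c * norm (ln (real d))"
    by (auto simp: eventually_at_top_linorder)
  define q where "q = c * ln A + real (r - 1)"
  define C where "C = A ^ N1 * 2 ^ (r - 1) * exp (2 * A)"
  show ?thesis unfolding poly_tractable_def
  proof (intro exI conjI allI impI)
    show "C > 0" unfolding C_def using A1 by simp
    show "2 * tau > 0" using tau by simp
    show "q \<ge> 0" unfolding q_def using c lnA by simp
    fix d :: nat and eps :: real
    assume d: "d \<ge> 1" and eps: "0 < eps \<and> eps \<le> 1"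
    define a where "a = card (I d)"
    define b where "b = d - a"
    have ad: "a \<le> d"
    proof -
      have "card (I d) \<le> card {1..d}" by (rule card_mono) (use I_ok d in auto)
      then show ?thesis unfolding a_def by simp
    qed
    have B: "\<forall>M. (\<Prod>m\<in>{2..M}. \<Sum>c\<in>{0..card (I d)}. (lam m powr tau)^c) \<le> (real a + 1) ^ (r - 1) * exp (2 * A)"
    proof
      fix M
      have "(\<Prod>m\<in>{2..M}. \<Sum>c\<in>{0..card (I d)}. mu m ^ c) \<le> (real (card (I d)) + 1) ^ (r - 1) * exp (2 * suminf (\<lambda>n. mu (Suc n)))"
        by (rule prod_bound[OF mu01 musmall summu])
      then show "(\<Prod>m\<in>{2..M}. \<Sum>c\<in>{0..card (I d)}. (lam m powr tau)^c) \<le> (real a + 1) ^ (r - 1) * exp (2 * A)"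
        unfolding mu_def A_def a_def by simp
    qed
    have cc: "finite (info_set lam I eps d) \<and> real (card (info_set lam I eps d)) \<le> eps powr (-(2*tau)) * A^(d - card (I d)) * ((real a + 1) ^ (r - 1) * exp (2 * A))"
      unfolding A_def
      by (rule core[OF nonneg le1 _ _ _ _ tau(1) summ _ B[unfolded A_def]]) (use I_ok d eps l1 in auto)
    have dpos: "real d > 0" using d by simp
    have claim1: "A ^ b \<le> A ^ N1 * real d powr (c * ln A)"
    proof (cases "d \<ge> N1")
      case True
      have "real b \<le> c * ln (real d)" using N1 True d unfolding b_def a_def b_of_def by auto
      have "A ^ b = A powr real b" using A1 by (simp add: powr_realpow)
      also have "\<dots> \<le> A powr (c * ln (real d))" by (rule powr_mono) (use \<open>real b \<le> c * ln (real d)\<close> A1 in auto)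
      also have "\<dots> = real d powr (c * ln A)" using A1 dpos by (simp add: powr_def)
      also have "\<dots> \<le> A ^ N1 * real d powr (c * ln A)"
      proof -
        have "1 \<le> A ^ N1" using A1 by (rule one_le_power)
        then show ?thesis using mult_right_mono[of 1 "A ^ N1" "real d powr (c * ln A)"] by simp
      qed
      finally show ?thesis .
    next
      case False
      have "A ^ b \<le> A ^ N1" using A1 False unfolding b_def by (intro power_increasing) auto
      also have "\<dots> \<le> A ^ N1 * real d powr (c * ln A)"
      proof -
        have "1 \<le> real d powr (c * ln A)" using d c lnA by (intro ge_one_powr_ge_zero) auto
        then show ?thesis using A1 by (simp add: mult_le_cancel_left1)
      qed
      finally show ?thesis .
    qed
    have claim2: "(real a + 1) ^ (r - 1) \<le> 2 ^ (r - 1) * real d powr real (r - 1)"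
    proof -
      have "(real a + 1) ^ (r - 1) \<le> (2 * real d) ^ (r - 1)" using ad d by (intro power_mono) auto
      also have "\<dots> = 2 ^ (r - 1) * real d powr real (r - 1)"
        using dpos by (simp add: power_mult_distrib powr_realpow)
      finally show ?thesis .
    qed
    have e0: "0 \<le> eps powr (-(2*tau))" by simp
    have "eps powr (-(2*tau)) * A^b * ((real a + 1) ^ (r - 1) * exp (2 * A))
        \<le> eps powr (-(2*tau)) * (A ^ N1 * real d powr (c * ln A)) * ((2 ^ (r - 1) * real d powr real (r - 1)) * exp (2 * A))"
      using claim1 claim2 e0 A1 by (intro mult_mono) (auto intro: mult_nonneg_nonneg)
    also have "\<dots> = C * eps powr (-(2*tau)) * real d powr q"
      unfolding C_def q_def by (simp add: powr_add ac_simps)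
    finally show "finite (info_set lam I eps d)" "real (card (info_set lam I eps d)) \<le> C * eps powr (-(2*tau)) * real d powr q"
      using cc unfolding b_def a_def by auto
  qed
qed


theorem proposition5:
  fixes lam :: "nat \<Rightarrow> real" and I :: "nat \<Rightarrow> nat set" and tau0 :: real
  assumes nonneg: "\<forall>m\<ge>1. 0 \<le> lam m"
    and noninc: "\<forall>m\<ge>1. lam (Suc m) \<le> lam m"
    and lam2_pos: "lam 2 > 0"
    and I_ok: "\<forall>d\<ge>1. I d \<noteq> {} \<and> I d \<subseteq> {1..d}"
    and I1: "I 1 = {1}"
    and tau0_pos: "tau0 > 0"
    and ltau: "summable (\<lambda>m. lam (Suc m) powr tau0)"
  shows "(lam 1 < 1 \<longrightarrow> strongly_poly_tractable lam I)
       \<and> (lam 1 = 1 \<and> lam 2 < 1 \<and> (\<lambda>d. real (b_of I d)) \<in> O(\<lambda>_. 1)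
            \<longrightarrow> strongly_poly_tractable lam I)
       \<and> (lam 1 = 1 \<and> (\<lambda>d. real (b_of I d)) \<in> O(\<lambda>d. ln (real d))
            \<longrightarrow> poly_tractable lam I)"
proof (intro conjI impI)
  assume "lam 1 < 1"
  then show "strongly_poly_tractable lam I"
    by (rule part1[OF nonneg noninc lam2_pos I_ok tau0_pos ltau])
next
  assume h: "lam 1 = 1 \<and> lam 2 < 1 \<and> (\<lambda>d. real (b_of I d)) \<in> O(\<lambda>_. 1)"
  then show "strongly_poly_tractable lam I"
    using part2[OF nonneg noninc lam2_pos I_ok tau0_pos ltau] by blast
next
  assume h: "lam 1 = 1 \<and> (\<lambda>d. real (b_of I d)) \<in> O(\<lambda>d. ln (real d))"
  then show "poly_tractable lam I"
    using part3[OF nonneg noninc lam2_pos I_ok tau0_pos ltau] by blast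
qed

end
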